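(* Let $G$ be a connected graph associated with a succinct representation $\mathcal{G}=(H,\{(\ell_i,S_i)\mid 1\le i\le r\})$ where $H$ consists of a single vertex $v$. Then $\mathcal{I}(G)\ge \sum_{i=1}^r\gamma(\ell_i)+\sum_{i=1}^r(\ell_i \bmod 2)$, where $\gamma(\ell)=\ell^2/2$ if $\ell$ is even and $\gamma(\ell)=(\ell^2-1)/2$ if $\ell$ is odd.
   Context: All graphs are finite, simple and undirected. For an ordering $\sigma$ of $V(G)$ and $u\in V(G)$, $N_L(u,\sigma)$ and $N_R(u,\sigma)$ are the sets of neighbours of $u$ preceding and following $u$; $\mathcal{I}(u,\sigma)=\big||N_L(u,\sigma)|-|N_R(u,\sigma)|\big|$, $\mathcal{I}(\sigma)=\sum_u\mathcal{I}(u,\sigma)$, and $\mathcal{I}(G)=\min_\sigma\mathcal{I}(\sigma)$. A succinct representation is a tuple $(H,\{(\ell_i,S_i)\mid 1\le i\le r\})$ where $H$ is a graph, each $\ell_i$ is a positive integer and $S_i\subseteq V(H)$; its associated graph $G$ has vertex set $V(H)\cup C_1\cup\dots\cup C_r$ (pairwise disjoint, $|C_i|=\ell_i$), with edges: those of $H$ on $V(H)$, all edges within each $C_i$, no edges between distinct $C_i$'s, and $w\in V(H)$ adjacent to every vertex of $C_i$ iff $w\in S_i$ (and to none otherwise). *)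

theory Defs
  imports Main
begin

definition simple_graph :: "'a set \<Rightarrow> ('a \<Rightarrow> 'a \<Rightarrow> bool) \<Rightarrow> bool" where
  "simple_graph V E \<longleftrightarrow> finite V \<and> (\<forall>x y. E x y \<longrightarrow> E y x) \<and> (\<forall>x. \<not> E x x)
     \<and> (\<forall>x y. E x y \<longrightarrow> x \<in> V \<and> y \<in> V)"

definition graph_connected :: "'a set \<Rightarrow> ('a \<Rightarrow> 'a \<Rightarrow> bool) \<Rightarrow> bool" where
  "graph_connected V E \<longleftrightarrow>
     (\<forall>u\<in>V. \<forall>w\<in>V. (\<lambda>x y. x \<in> V \<and> y \<in> V \<and> E x y)\<^sup>*\<^sup>* u w)"

definition pos :: "'a list \<Rightarrow> 'a \<Rightarrow> nat" where
  "pos xs u = (LEAST k. k < length xs \<and> xs ! k = u)"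

definition orderings :: "'a set \<Rightarrow> 'a list set" where
  "orderings V = {xs. distinct xs \<and> set xs = V}"

definition left_nbrs :: "('a \<Rightarrow> 'a \<Rightarrow> bool) \<Rightarrow> 'a list \<Rightarrow> 'a \<Rightarrow> 'a set" where
  "left_nbrs E xs u = {w \<in> set xs. E u w \<and> pos xs w < pos xs u}"

definition right_nbrs :: "('a \<Rightarrow> 'a \<Rightarrow> bool) \<Rightarrow> 'a list \<Rightarrow> 'a \<Rightarrow> 'a set" where
  "right_nbrs E xs u = {w \<in> set xs. E u w \<and> pos xs u < pos xs w}"

definition vertex_imbalance :: "('a \<Rightarrow> 'a \<Rightarrow> bool) \<Rightarrow> 'a list \<Rightarrow> 'a \<Rightarrow> nat" where
  "vertex_imbalance E xs u =
     nat \<bar>int (card (left_nbrs E xs u)) - int (card (right_nbrs E xs u))\<bar>"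

definition ordering_imbalance :: "('a \<Rightarrow> 'a \<Rightarrow> bool) \<Rightarrow> 'a list \<Rightarrow> nat" where
  "ordering_imbalance E xs = (\<Sum>u\<in>set xs. vertex_imbalance E xs u)"

definition graph_imbalance :: "'a set \<Rightarrow> ('a \<Rightarrow> 'a \<Rightarrow> bool) \<Rightarrow> nat" where
  "graph_imbalance V E = Min (ordering_imbalance E ` orderings V)"

text \<open>Succinct representation: graph H = (VH, EH) and a list of pairs (l_i, S_i), i = 1..r
  stored at list positions 0..r-1.  Associated graph on Inl ` VH \<union> clique vertices Inr (i,j), j < l_i.\<close>
definition succinct_valid :: "'a set \<Rightarrow> ('a \<Rightarrow> 'a \<Rightarrow> bool) \<Rightarrow> (nat \<times> 'a set) list \<Rightarrow> bool" where
  "succinct_valid VH EH reps \<longleftrightarrow> simple_graph VH EH \<and>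
     (\<forall>i < length reps. 0 < fst (reps ! i) \<and> snd (reps ! i) \<subseteq> VH)"

definition assoc_vertices :: "'a set \<Rightarrow> (nat \<times> 'a set) list \<Rightarrow> ('a + nat \<times> nat) set" where
  "assoc_vertices VH reps =
     Inl ` VH \<union> {Inr (i, j) | i j. i < length reps \<and> j < fst (reps ! i)}"

fun assoc_edge :: "('a \<Rightarrow> 'a \<Rightarrow> bool) \<Rightarrow> (nat \<times> 'a set) list \<Rightarrow> ('a + nat \<times> nat) \<Rightarrow> ('a + nat \<times> nat) \<Rightarrow> bool" where
  "assoc_edge EH reps (Inl a) (Inl b) = EH a b"
| "assoc_edge EH reps (Inr (i, j)) (Inr (i', j')) = (i = i' \<and> j \<noteq> j' \<and> i < length reps
      \<and> j < fst (reps ! i) \<and> j' < fst (reps ! i))"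
| "assoc_edge EH reps (Inl a) (Inr (i, j)) = (i < length reps \<and> j < fst (reps ! i) \<and> a \<in> snd (reps ! i))"
| "assoc_edge EH reps (Inr (i, j)) (Inl a) = (i < length reps \<and> j < fst (reps ! i) \<and> a \<in> snd (reps ! i))"

definition gamma :: "nat \<Rightarrow> nat" where
  "gamma l = (if even l then l^2 div 2 else (l^2 - 1) div 2)"

end

theory Submission
  imports Defs
begin

lemma rank_sum:
  fixes p :: "'b \<Rightarrow> nat" and g :: "nat \<Rightarrow> int"
  assumes "finite K" "inj_on p K"
  shows "(\<Sum>u\<in>K. g (card {w\<in>K. p w < p u})) = (\<Sum>k<card K. g k)"
  using assms
proof (induction "card K" arbitrary: K)
  case 0
  then show ?case by simp
next
  case (Suc n)
  then have ne: "K \<noteq> {}" by auto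
  have "Max (p ` K) \<in> p ` K" using Suc.prems ne by simp
  then obtain m where m: "m \<in> K" "p m = Max (p ` K)" by auto
  have mmax: "\<And>u. u \<in> K \<Longrightarrow> p u \<le> p m" using m Suc.prems by simp
  define K' where "K' = K - {m}"
  have cK': "n = card K'" using Suc.hyps(2) m K'_def Suc.prems by simp
  have fK': "finite K'" using K'_def Suc.prems by simp
  have iK': "inj_on p K'" using K'_def Suc.prems inj_on_subset by blast
  have IH: "(\<Sum>u\<in>K'. g (card {w\<in>K'. p w < p u})) = (\<Sum>k<n. g k)"
    using Suc.hyps(1)[OF cK' fK' iK'] cK' by simp
  have strict: "\<And>u. u \<in> K' \<Longrightarrow> p u < p m"
  proof -
    fix u assume u: "u \<in> K'"
    then have "u \<in> K" "u \<noteq> m" using K'_def by auto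
    then have "p u \<noteq> p m" using m(1) Suc.prems(2) by (meson inj_onD)
    then show "p u < p m" using mmax \<open>u \<in> K\<close> by (simp add: order_less_le)
  qed
  have e1: "{w\<in>K. p w < p m} = K'"
    using strict K'_def by auto
  have e2: "\<And>u. u \<in> K' \<Longrightarrow> {w\<in>K. p w < p u} = {w\<in>K'. p w < p u}"
    using strict K'_def mmax by fastforce
  have "(\<Sum>u\<in>K. g (card {w\<in>K. p w < p u}))
        = g (card {w\<in>K. p w < p m}) + (\<Sum>u\<in>K'. g (card {w\<in>K. p w < p u}))"
    using Suc.prems(1) m(1) K'_def by (simp add: sum.remove)
  also have "\<dots> = g n + (\<Sum>u\<in>K'. g (card {w\<in>K'. p w < p u}))"
    using e1 e2 cK' by simp
  also have "\<dots> = (\<Sum>k<Suc n. g k)" using IH by simp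
  finally show ?case using Suc.hyps(2) by simp
qed

lemma rank_split:
  fixes p :: "'b \<Rightarrow> nat"
  assumes "finite K" "inj_on p K" "u \<in> K"
  shows "card {w\<in>K. p w < p u} + card {w\<in>K. p u < p w} = card K - 1"
proof -
  have "K - {u} = {w\<in>K. p w < p u} \<union> {w\<in>K. p u < p w}"
  proof -
    have "\<And>w. w \<in> K \<Longrightarrow> w \<noteq> u \<Longrightarrow> p w \<noteq> p u"
      using assms by (meson inj_onD)
    then show ?thesis by fastforce
  qed
  then have "card (K - {u}) = card {w\<in>K. p w < p u} + card {w\<in>K. p u < p w}"
    using assms(1) by (simp add: card_Un_disjoint disjoint_iff)
  then show ?thesis using assms by simp
qed

lemma T_sum: "2 * (\<Sum>k<Suc l. \<bar>2 * int k - int l\<bar>) = int l ^ 2 + 2 * int l + int (l mod 2)"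
proof (induction l rule: less_induct)
  case (less l)
  show ?case
  proof (cases l)
    case 0 then show ?thesis by simp
  next
    case (Suc l1)
    show ?thesis
    proof (cases l1)
      case 0 then show ?thesis using Suc by simp
    next
      case (Suc m)
      have lm: "l = m + 2" using Suc \<open>l = Suc l1\<close> by simp
      have IH: "2 * (\<Sum>k<Suc m. \<bar>2 * int k - int m\<bar>) = int m ^ 2 + 2 * int m + int (m mod 2)"
        using less lm by simp
      have "(\<Sum>k<Suc l. \<bar>2 * int k - int l\<bar>) = \<bar>0 - int l\<bar> + (\<Sum>k<Suc (Suc m). \<bar>2 * int (Suc k) - int l\<bar>)"
        unfolding lm by (subst sum.lessThan_Suc_shift) simp
      also have "(\<Sum>k<Suc (Suc m). \<bar>2 * int (Suc k) - int l\<bar>) = (\<Sum>k<Suc (Suc m). \<bar>2 * int k - int m\<bar>)"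
        unfolding lm by (intro sum.cong) auto
      also have "\<dots> = (\<Sum>k<Suc m. \<bar>2 * int k - int m\<bar>) + (int m + 2)" by simp
      finally have "(\<Sum>k<Suc l. \<bar>2 * int k - int l\<bar>) = int l + (\<Sum>k<Suc m. \<bar>2 * int k - int m\<bar>) + (int m + 2)"
        by simp
      then show ?thesis using IH lm by (simp add: power2_eq_square algebra_simps)
    qed
  qed
qed

lemma gamma_int: "2 * int (gamma l) = int l ^ 2 - int (l mod 2)"
proof (cases "even l")
  case True
  then obtain m where "l = 2 * m" by auto
  then show ?thesis by (simp add: gamma_def power2_eq_square)
next
  case False
  then obtain m where m: "l = 2 * m + 1" using oddE by blast
  have "l^2 - 1 = 2 * (2*m*m + 2*m)" unfolding m by (simp add: power2_eq_square algebra_simps)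
  have "l mod 2 = 1" using False by presburger
  then show ?thesis using False m \<open>l^2 - 1 = _\<close> by (simp add: gamma_def power2_eq_square algebra_simps)
qed


lemma pos_prop:
  assumes "u \<in> set xs"
  shows "pos xs u < length xs \<and> xs ! pos xs u = u"
proof -
  obtain k where "k < length xs \<and> xs ! k = u" using assms by (meson in_set_conv_nth)
  then show ?thesis unfolding pos_def by (rule LeastI)
qed

lemma pos_inj: "inj_on (pos xs) (set xs)"
  by (metis inj_onI pos_prop)

lemma clique_bound:
  fixes xs :: "'x list" and E :: "'x \<Rightarrow> 'x \<Rightarrow> bool" and K :: "'x set"
  assumes fin: "finite K" and Ksub: "K \<subseteq> set xs" and cK: "card K = Suc l"
    and a: "a \<in> K"
    and nb: "\<And>u w. u \<in> K - {a} \<Longrightarrow> w \<in> set xs \<Longrightarrow> E u w \<longleftrightarrow> w \<in> K \<and> w \<noteq> u"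
  shows "gamma l + l mod 2 \<le> (\<Sum>u\<in>K - {a}. vertex_imbalance E xs u)"
proof -
  let ?p = "pos xs"
  have inj: "inj_on ?p K" using pos_inj Ksub inj_on_subset by blast
  define c where "c u = card {w\<in>K. ?p w < ?p u}" for u
  have vi: "int (vertex_imbalance E xs u) = \<bar>2 * int (c u) - int l\<bar>" if u: "u \<in> K - {a}" for u
  proof -
    have L: "left_nbrs E xs u = {w\<in>K. ?p w < ?p u}"
      unfolding left_nbrs_def using nb[OF u] Ksub by auto
    have R: "right_nbrs E xs u = {w\<in>K. ?p u < ?p w}"
      unfolding right_nbrs_def using nb[OF u] Ksub by auto
    have "c u + card {w\<in>K. ?p u < ?p w} = l"
      using rank_split[OF fin inj, of u] u cK c_def by simp
    then show ?thesis unfolding vertex_imbalance_def L R c_def by simp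
  qed
  have ca: "c a \<le> l"
  proof -
    have "{w\<in>K. ?p w < ?p a} \<subseteq> K - {a}" by auto
    then have "c a \<le> card (K - {a})" unfolding c_def using fin by (simp add: card_mono)
    then show ?thesis using cK a fin by simp
  qed
  have S: "(\<Sum>u\<in>K. \<bar>2 * int (c u) - int l\<bar>) = (\<Sum>k<Suc l. \<bar>2 * int k - int l\<bar>)"
    using rank_sum[OF fin inj, of "\<lambda>k. \<bar>2 * int k - int l\<bar>"] cK unfolding c_def by simp
  have "(\<Sum>u\<in>K. \<bar>2 * int (c u) - int l\<bar>) = \<bar>2 * int (c a) - int l\<bar> + (\<Sum>u\<in>K - {a}. \<bar>2 * int (c u) - int l\<bar>)"
    using fin a by (simp add: sum.remove)
  also have "(\<Sum>u\<in>K - {a}. \<bar>2 * int (c u) - int l\<bar>) = int (\<Sum>u\<in>K - {a}. vertex_imbalance E xs u)"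
    using vi by (simp add: of_nat_sum)
  finally have "(\<Sum>k<Suc l. \<bar>2 * int k - int l\<bar>) \<le> int l + int (\<Sum>u\<in>K - {a}. vertex_imbalance E xs u)"
    using S ca by linarith
  then have "int l ^ 2 + int (l mod 2) \<le> 2 * int (\<Sum>u\<in>K - {a}. vertex_imbalance E xs u)"
    using T_sum[of l] by linarith
  then have "2 * int (gamma l) + 2 * int (l mod 2) \<le> 2 * int (\<Sum>u\<in>K - {a}. vertex_imbalance E xs u)"
    using gamma_int[of l] by linarith
  then show ?thesis by linarith
qed

theorem proposition2:
  fixes v :: 'a and EH :: "'a \<Rightarrow> 'a \<Rightarrow> bool" and reps :: "(nat \<times> 'a set) list"
  assumes "succinct_valid {v} EH reps"
    and "graph_connected (assoc_vertices {v} reps) (assoc_edge EH reps)"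
  shows "graph_imbalance (assoc_vertices {v} reps) (assoc_edge EH reps)
           \<ge> (\<Sum>i<length reps. gamma (fst (reps ! i))) + (\<Sum>i<length reps. fst (reps ! i) mod 2)"
proof -
  define V where "V = assoc_vertices {v} reps"
  define E where "E = assoc_edge EH reps"
  define L where "L i = fst (reps ! i)" for i
  define r where "r = length reps"
  define Sg where "Sg = (SIGMA i:{..<r}. {..<L i})"
  have Vdef: "V = insert (Inl v) ((\<lambda>(i,j). Inr (i,j)) ` Sg)"
    unfolding V_def assoc_vertices_def Sg_def L_def r_def by auto
  have finSg: "finite Sg" unfolding Sg_def by auto
  have finV: "finite V" using Vdef finSg by simp
  have sg: "simple_graph {v} EH" and Spos: "\<And>i. i < r \<Longrightarrow> 0 < L i"
    and Ssub: "\<And>i. i < r \<Longrightarrow> snd (reps ! i) \<subseteq> {v}"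
    using assms(1) unfolding succinct_valid_def L_def r_def by auto
  have Sv: "snd (reps ! i) = {v}" if i: "i < r" for i
  proof (rule ccontr)
    assume "snd (reps ! i) \<noteq> {v}"
    then have nv: "v \<notin> snd (reps ! i)" using Ssub[OF i] by auto
    let ?R = "\<lambda>x y. x \<in> V \<and> y \<in> V \<and> E x y"
    have in0: "Inr (i, 0) \<in> V" using Vdef Spos[OF i] i unfolding Sg_def by auto
    have inv: "Inl v \<in> V" using Vdef by simp
    have reach: "?R\<^sup>*\<^sup>* (Inr (i,0)) (Inl v)"
      using assms(2) in0 inv unfolding graph_connected_def V_def E_def by blast
    have "?R\<^sup>*\<^sup>* (Inr (i,0)) w \<Longrightarrow> (\<exists>j. w = Inr (i,j))" for w
    proof (induction rule: rtranclp_induct)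
      case base then show ?case by simp
    next
      case (step y z)
      then obtain j where y: "y = Inr (i,j)" by blast
      show ?case
      proof (cases z)
        case (Inl a)
        then have "a = v" using step(2) Vdef by auto
        then show ?thesis using step(2) y Inl nv unfolding E_def by simp
      next
        case (Inr b)
        then show ?thesis using step(2) y unfolding E_def by (cases b) auto
      qed
    qed
    then show False using reach by blast
  qed
  have bound: "(\<Sum>i<r. gamma (L i)) + (\<Sum>i<r. L i mod 2) \<le> ordering_imbalance E xs"
    if xs: "xs \<in> orderings V" for xs
  proof -
    have setxs: "set xs = V" using xs unfolding orderings_def by simp
    have per: "gamma (L i) + L i mod 2 \<le> (\<Sum>j<L i. vertex_imbalance E xs (Inr (i,j)))"
      if i: "i < r" for i
    proof -
      define K where "K = insert (Inl v) ((\<lambda>j. Inr (i,j)) ` {..<L i})"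
      have KV: "K \<subseteq> set xs" unfolding setxs Vdef K_def Sg_def using i by auto
      have finK: "finite K" unfolding K_def by simp
      have injj: "inj_on (\<lambda>j. (Inr (i,j) :: 'a + nat \<times> nat)) {..<L i}" by (simp add: inj_on_def)
      have cK: "card K = Suc (L i)" unfolding K_def using injj by (subst card_insert_disjoint) (auto simp: card_image)
      have nb: "E u w \<longleftrightarrow> w \<in> K \<and> w \<noteq> u" if u: "u \<in> K - {Inl v}" and w: "w \<in> set xs" for u w
      proof -
        obtain j where uj: "u = Inr (i,j)" "j < L i" using u unfolding K_def by auto
        show ?thesis
        proof (cases w)
          case (Inl a)
          then have "a = v" using w setxs Vdef by auto
          then show ?thesis using uj Inl Sv[OF i] i unfolding E_def K_def L_def r_def by auto
        next
          case (Inr b)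
          then show ?thesis using uj i unfolding E_def K_def L_def r_def by (cases b) auto
        qed
      qed
      have "gamma (L i) + L i mod 2 \<le> (\<Sum>u\<in>K - {Inl v}. vertex_imbalance E xs u)"
        by (rule clique_bound[OF finK KV cK _ nb]) (simp add: K_def)
      also have "K - {Inl v} = (\<lambda>j. Inr (i,j)) ` {..<L i}" unfolding K_def by auto
      also have "(\<Sum>u\<in>(\<lambda>j. Inr (i,j)) ` {..<L i}. vertex_imbalance E xs u)
                 = (\<Sum>j<L i. vertex_imbalance E xs (Inr (i,j)))"
        using injj by (simp add: sum.reindex)
      finally show ?thesis .
    qed
    have "(\<Sum>i<r. gamma (L i)) + (\<Sum>i<r. L i mod 2) = (\<Sum>i<r. gamma (L i) + L i mod 2)"
      by (simp add: sum.distrib)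
    also have "\<dots> \<le> (\<Sum>i<r. \<Sum>j<L i. vertex_imbalance E xs (Inr (i,j)))"
      using per by (intro sum_mono) auto
    also have "\<dots> = (\<Sum>(i,j)\<in>Sg. vertex_imbalance E xs (Inr (i,j)))"
      unfolding Sg_def by (rule sum.Sigma) auto
    also have "\<dots> = (\<Sum>u\<in>(\<lambda>(i,j). Inr (i,j)) ` Sg. vertex_imbalance E xs u)"
      by (subst sum.reindex) (auto simp: inj_on_def case_prod_beta)
    also have "\<dots> \<le> (\<Sum>u\<in>V. vertex_imbalance E xs u)"
      using finV Vdef by (intro sum_mono2) auto
    also have "\<dots> = ordering_imbalance E xs"
      unfolding ordering_imbalance_def setxs by simp
    finally show ?thesis .
  qed
  obtain xs0 where "set xs0 = V \<and> distinct xs0" using finite_distinct_list[OF finV] by blast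
  then have ne: "orderings V \<noteq> {}" unfolding orderings_def by auto
  have fo: "finite (orderings V)"
  proof -
    have "orderings V \<subseteq> {xs. set xs \<subseteq> V \<and> length xs \<le> card V}"
      unfolding orderings_def using distinct_card by fastforce
    moreover have "finite {xs. set xs \<subseteq> V \<and> length xs \<le> card V}"
      using finite_lists_length_le[OF finV] by simp
    ultimately show ?thesis by (rule finite_subset)
  qed
  have "(\<Sum>i<r. gamma (L i)) + (\<Sum>i<r. L i mod 2) \<le> Min (ordering_imbalance E ` orderings V)"
    using fo ne bound by (subst Min_ge_iff) auto
  then show ?thesis unfolding graph_imbalance_def V_def E_def L_def r_def by simp
qed

end
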